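(* For each $p$, let $n=n(p)$ with $n/p$ bounded, and let $r_1,\dots,r_n\in\mathbb{R}^p$ be independent random vectors (a triangular array), each with the same mean and the same covariance $\Sigma$, with $\|\Sigma\|_2\le\log p$ and $\operatorname{trace}(\Sigma)/p\le K$ for $K$ independent of $p$, and each satisfying one of the following concentration hypotheses (with $C$ independent of $p$ and $F$, $m_F$ a median): (a) for every convex $1$-Lipschitz $F$, $P(|F(r_i)-m_F|>t)\le C\exp(-c(p)t^2)$, $c(p)$ constant or $\asymp p^{-\alpha}$, $0\le\alpha<1$; (b) for every convex $1$-Lipschitz $F$, $P(|F(r_i)-m_F|>t)\le C\exp(-c(p)t^b)$ for fixed $b>0$, $c(p)$ constant or $\asymp p^{-\alpha}$, $0\le\alpha<b/2$; (c) $r_i=\Phi(u)$ with $\Phi$ $1$-Lipschitz and $P(|F(u)-m_F|>t)\le C\exp(-c(p)t^2)$ for every $1$-Lipschitz $F$, $c(p)$ as in (a). Then the spectral distribution of $A_n=\frac1n\sum_{i=1}^nr_ir_i^*$ is a.s. tight.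
   Context: The spectral distribution of a $p\times p$ Hermitian matrix puts mass $1/p$ at each eigenvalue. *)

theory Defs
  imports "HOL-Probability.Probability" "Jordan_Normal_Form.Char_Poly"
begin

text \<open>Vectors of R^p are represented as functions nat => real; only the
coordinates j < p matter.\<close>

definition edist :: "nat \<Rightarrow> (nat \<Rightarrow> real) \<Rightarrow> (nat \<Rightarrow> real) \<Rightarrow> real" where
  "edist p x y = sqrt (\<Sum>j<p. (x j - y j)^2)"

definition lip1 :: "nat \<Rightarrow> ((nat \<Rightarrow> real) \<Rightarrow> real) \<Rightarrow> bool" where
  "lip1 p F \<longleftrightarrow> (\<forall>x y. \<bar>F x - F y\<bar> \<le> edist p x y)"

definition convex_fun :: "((nat \<Rightarrow> real) \<Rightarrow> real) \<Rightarrow> bool" where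
  "convex_fun F \<longleftrightarrow> (\<forall>x y (t::real). 0 \<le> t \<and> t \<le> 1 \<longrightarrow>
      F (\<lambda>j. t * x j + (1 - t) * y j) \<le> t * F x + (1 - t) * F y)"

definition is_median :: "'a measure \<Rightarrow> ('a \<Rightarrow> real) \<Rightarrow> real \<Rightarrow> bool" where
  "is_median M X m \<longleftrightarrow> measure M {\<omega>\<in>space M. X \<omega> \<ge> m} \<ge> 1/2 \<and>
                        measure M {\<omega>\<in>space M. X \<omega> \<le> m} \<ge> 1/2"

definition concentr :: "'a measure \<Rightarrow> (((nat \<Rightarrow> real) \<Rightarrow> real) \<Rightarrow> bool) \<Rightarrow> ('a \<Rightarrow> nat \<Rightarrow> real)
     \<Rightarrow> real \<Rightarrow> real \<Rightarrow> real \<Rightarrow> bool" where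
  "concentr M Fs X C c b \<longleftrightarrow> (\<forall>F. Fs F \<longrightarrow> (\<exists>m. is_median M (\<lambda>\<omega>. F (X \<omega>)) m \<and>
      (\<forall>t>0. measure M {\<omega>\<in>space M. \<bar>F (X \<omega>) - m\<bar> > t} \<le> C * exp (- c * t powr b))))"

definition hypA :: "'a measure \<Rightarrow> nat \<Rightarrow> ('a \<Rightarrow> nat \<Rightarrow> real) \<Rightarrow> real \<Rightarrow> real \<Rightarrow> bool" where
  "hypA M p X C c \<longleftrightarrow> concentr M (\<lambda>F. convex_fun F \<and> lip1 p F) X C c 2"

definition hypB :: "'a measure \<Rightarrow> nat \<Rightarrow> ('a \<Rightarrow> nat \<Rightarrow> real) \<Rightarrow> real \<Rightarrow> real \<Rightarrow> real \<Rightarrow> bool" where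
  "hypB M p X C c b \<longleftrightarrow> concentr M (\<lambda>F. convex_fun F \<and> lip1 p F) X C c b"

definition hypC :: "'a measure \<Rightarrow> nat \<Rightarrow> ('a \<Rightarrow> nat \<Rightarrow> real) \<Rightarrow> real \<Rightarrow> real \<Rightarrow> bool" where
  "hypC M p X C c \<longleftrightarrow> (\<exists>(d::nat) (u::'a \<Rightarrow> nat \<Rightarrow> real) (\<Phi>::(nat \<Rightarrow> real) \<Rightarrow> nat \<Rightarrow> real).
      (\<forall>j<d. (\<lambda>\<omega>. u \<omega> j) \<in> borel_measurable M) \<and>
      (\<forall>x y. edist p (\<Phi> x) (\<Phi> y) \<le> edist d x y) \<and>
      (\<forall>\<omega>\<in>space M. \<forall>j<p. X \<omega> j = \<Phi> (u \<omega>) j) \<and>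
      concentr M (lip1 d) u C c 2)"

definition op_norm2 :: "nat \<Rightarrow> (nat \<Rightarrow> nat \<Rightarrow> real) \<Rightarrow> real" where
  "op_norm2 p S = Sup {sqrt (\<Sum>j<p. (\<Sum>k<p. S j k * v k)^2) | v. (\<Sum>k<p. (v k)^2) \<le> 1}"

definition sample_mat :: "nat \<Rightarrow> nat \<Rightarrow> (nat \<Rightarrow> nat \<Rightarrow> real) \<Rightarrow> real mat" where
  "sample_mat p n r = mat p p (\<lambda>(j,k). (1 / real n) * (\<Sum>i<n. r i j * r i k))"

definition spectral_distribution :: "real mat \<Rightarrow> real measure" where
  "spectral_distribution A =
     distr (measure_pmf (pmf_of_multiset (proots (char_poly A)))) borel (\<lambda>x. x)"

end

theory Submission
  imports Defs "HOL-Real_Asymp.Real_Asymp"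
begin



lemma sym_real_eigvec:
  fixes M :: "real mat"
  assumes M: "M \<in> carrier_mat m m" and m: "m > 0"
    and sym: "\<And>i j. i<m \<Longrightarrow> j<m \<Longrightarrow> M$$(i,j) = M$$(j,i)"
  shows "\<exists>l v. v \<in> carrier_vec m \<and> v \<noteq> 0\<^sub>v m \<and> M *\<^sub>v v = l \<cdot>\<^sub>v v"
proof -
  define Mc where "Mc = map_mat complex_of_real M"
  have Mc: "Mc \<in> carrier_mat m m" using M by (simp add: Mc_def)
  obtain as where cp: "char_poly Mc = (\<Prod>a\<leftarrow>as. [:- a, 1:])" and len: "length as = m"
    using char_poly_factorized[OF Mc] by blast
  obtain a as' where as: "as = a # as'" using len m by (cases as) auto
  have "poly (char_poly Mc) a = 0" unfolding cp as by simp
  hence "eigenvalue Mc a" using eigenvalue_root_char_poly[OF Mc] by simp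
  then obtain v where ev: "eigenvector Mc v a" unfolding eigenvalue_def by blast
  hence v: "v \<in> carrier_vec m" "v \<noteq> 0\<^sub>v m" "Mc *\<^sub>v v = a \<cdot>\<^sub>v v"
    unfolding eigenvector_def using Mc by auto
  define x where "x i = Re (v $ i)" for i
  define y where "y i = Im (v $ i)" for i
  have eq: "(\<Sum>j<m. complex_of_real (M$$(i,j)) * v$j) = a * v$i" if "i<m" for i
  proof -
    have "(Mc *\<^sub>v v) $ i = a * v $ i" using v(3) that v(1) by simp
    moreover have "(Mc *\<^sub>v v) $ i = (\<Sum>j<m. complex_of_real (M$$(i,j)) * v$j)"
      using that M v(1) by (simp add: Mc_def scalar_prod_def lessThan_atLeast0)
    ultimately show ?thesis by simp
  qed
  have ex: "(\<Sum>j<m. M$$(i,j) * x j) = Re a * x i - Im a * y i" if "i<m" for i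
    using arg_cong[OF eq[OF that], of Re] by (simp add: x_def y_def Re_sum)
  have ey: "(\<Sum>j<m. M$$(i,j) * y j) = Im a * x i + Re a * y i" if "i<m" for i
    using arg_cong[OF eq[OF that], of Im] by (simp add: x_def y_def Im_sum)
  have "(\<Sum>i<m. x i * (\<Sum>j<m. M$$(i,j) * y j)) = (\<Sum>i<m. y i * (\<Sum>j<m. M$$(i,j) * x j))"
  proof -
    have "(\<Sum>i<m. x i * (\<Sum>j<m. M$$(i,j) * y j)) = (\<Sum>i<m. \<Sum>j<m. x i * M$$(i,j) * y j)"
      by (simp add: sum_distrib_left mult.assoc)
    also have "\<dots> = (\<Sum>j<m. \<Sum>i<m. x i * M$$(i,j) * y j)" by (rule sum.swap)
    also have "\<dots> = (\<Sum>j<m. y j * (\<Sum>i<m. M$$(j,i) * x i))"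
      by (simp add: sum_distrib_left sym mult_ac)
    finally show ?thesis .
  qed
  hence "(\<Sum>i<m. x i * (Im a * x i + Re a * y i)) = (\<Sum>i<m. y i * (Re a * x i - Im a * y i))"
    by (simp add: ex ey)
  hence "Im a * (\<Sum>i<m. (x i)^2 + (y i)^2) = 0"
    by (simp add: sum_distrib_left algebra_simps power2_eq_square sum.distrib sum_subtractf)
  moreover have "(\<Sum>i<m. (x i)^2 + (y i)^2) > 0"
  proof -
    obtain i where i: "i < m" "v $ i \<noteq> 0" using v(1,2) by (metis vec_eq_iff carrier_vecD index_zero_vec(1) index_zero_vec(2))
    hence "(x i)^2 + (y i)^2 > 0" by (simp add: x_def y_def complex_eq_iff sum_power2_gt_zero_iff)
    moreover have "(x i)^2 + (y i)^2 \<le> (\<Sum>i<m. (x i)^2 + (y i)^2)"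
      by (rule member_le_sum) (use i in auto)
    ultimately show ?thesis by linarith
  qed
  ultimately have im: "Im a = 0" by simp
  show ?thesis
  proof (cases "\<exists>i<m. x i \<noteq> 0")
    case True
    then obtain i where "i<m" "x i \<noteq> 0" by blast
    hence "vec m x \<noteq> 0\<^sub>v m" by (metis index_vec index_zero_vec(1))
    moreover have "M *\<^sub>v vec m x = Re a \<cdot>\<^sub>v vec m x"
      by (rule eq_vecI) (use M ex im in \<open>auto simp: scalar_prod_def lessThan_atLeast0\<close>)
    ultimately show ?thesis by (intro exI[of _ "Re a"] exI[of _ "vec m x"]) auto
  next
    case False
    obtain i where i: "i < m" "v $ i \<noteq> 0" using v(1,2) by (metis vec_eq_iff carrier_vecD index_zero_vec(1) index_zero_vec(2))
    with False have "y i \<noteq> 0" by (simp add: x_def y_def complex_eq_iff)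
    hence "vec m y \<noteq> 0\<^sub>v m" using i by (metis index_vec index_zero_vec(1))
    moreover have "M *\<^sub>v vec m y = Re a \<cdot>\<^sub>v vec m y"
      by (rule eq_vecI) (use M ey im in \<open>auto simp: scalar_prod_def lessThan_atLeast0\<close>)
    ultimately show ?thesis by (intro exI[of _ "Re a"] exI[of _ "vec m y"]) auto
  qed
qed



definition ip :: "nat \<Rightarrow> (nat \<Rightarrow> real) \<Rightarrow> (nat \<Rightarrow> real) \<Rightarrow> real" where
  "ip p a b = (\<Sum>j<p. a j * b j)"

lemma bessel:
  fixes e :: "nat \<Rightarrow> nat \<Rightarrow> real"
  assumes S: "finite S"
    and on: "\<And>k l. k \<in> S \<Longrightarrow> l \<in> S \<Longrightarrow> ip p (e k) (e l) = (if k = l then 1 else 0)"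
  shows "(\<Sum>k\<in>S. (ip p (e k) z)^2) \<le> (\<Sum>j<p. (z j)^2)"
proof -
  define b where "b k = ip p (e k) z" for k
  have "0 \<le> (\<Sum>j<p. (z j - (\<Sum>k\<in>S. b k * e k j))^2)" by (simp add: sum_nonneg)
  also have "\<dots> = (\<Sum>j<p. (z j)^2) - 2 * (\<Sum>k\<in>S. b k * (\<Sum>j<p. e k j * z j))
       + (\<Sum>j<p. (\<Sum>k\<in>S. b k * e k j)^2)"
    by (simp add: power2_diff sum.distrib sum_subtractf sum_distrib_left sum_distrib_right
        mult_ac sum.swap[of _ S])
  also have "(\<Sum>j<p. (\<Sum>k\<in>S. b k * e k j)^2) = (\<Sum>k\<in>S. \<Sum>l\<in>S. b k * b l * ip p (e k) (e l))"
    by (simp add: power2_eq_square sum_product ip_def sum_distrib_left mult_ac sum.swap[of _ "{..<p}"])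
  also have "\<dots> = (\<Sum>k\<in>S. (b k)^2)"
    by (simp add: on S power2_eq_square if_distrib cong: if_cong)
  finally show ?thesis by (simp add: b_def ip_def power2_eq_square)
qed


lemma count_core:
  fixes e :: "nat \<Rightarrow> nat \<Rightarrow> real" and r :: "nat \<Rightarrow> nat \<Rightarrow> real"
  assumes S: "finite S"
    and on: "\<And>k l. k \<in> S \<Longrightarrow> l \<in> S \<Longrightarrow> ip p (e k) (e l) = (if k = l then 1 else 0)"
    and quad: "\<And>k l. k \<in> S \<Longrightarrow> l \<in> S \<Longrightarrow>
        (1 / real n) * (\<Sum>i<n. ip p (e k) (r i) * ip p (e l) (r i)) = (if k = l then d k else 0)"
    and big: "\<And>k. k \<in> S \<Longrightarrow> T \<le> d k" and T: "0 \<le> T" and n: "n > 0"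
  shows "(real (card S) - 1) * T \<le> (1 / real n) * (\<Sum>i<n. \<Sum>j<p. (r i j - (1 / real n) * (\<Sum>i'<n. r i' j))^2)"
proof -
  define rb where "rb j = (1 / real n) * (\<Sum>i'<n. r i' j)" for j
  define z where "z i j = r i j - rb j" for i j
  define a where "a i k = ip p (e k) (z i)" for i k
  define c where "c k = ip p (e k) rb" for k
  define G where "G k l = (1 / real n) * (\<Sum>i<n. a i k * a i l)" for k l
  have rz: "ip p (e k) (r i) = a i k + c k" for i k
    by (simp add: a_def c_def z_def ip_def algebra_simps sum.distrib[symmetric])
  have sa: "(\<Sum>i<n. a i k) = 0" for k
  proof -
    have "(\<Sum>i<n. a i k) = (\<Sum>j<p. e k j * (\<Sum>i<n. z i j))"
      by (simp add: a_def ip_def sum_distrib_left sum.swap[of _ "{..<n}"])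
    moreover have "(\<Sum>i<n. z i j) = 0" for j
      using n by (simp add: z_def sum_subtractf rb_def)
    ultimately show ?thesis by simp
  qed
  have dG: "(if k = l then d k else 0) = G k l + c k * c l" if "k \<in> S" "l \<in> S" for k l
  proof -
    have "(1 / real n) * (\<Sum>i<n. (a i k + c k) * (a i l + c l))
        = G k l + (1 / real n) * (c l * (\<Sum>i<n. a i k) + c k * (\<Sum>i<n. a i l)) + c k * c l"
      using n by (simp add: G_def algebra_simps sum.distrib sum_distrib_left sum_distrib_right)
    thus ?thesis using quad[OF that] by (simp add: rz sa)
  qed
  define trG where "trG = (\<Sum>k\<in>S. G k k)"
  have trG_le: "trG \<le> (1 / real n) * (\<Sum>i<n. \<Sum>j<p. (z i j)^2)"
  proof -
    have "trG = (1 / real n) * (\<Sum>i<n. \<Sum>k\<in>S. (a i k)^2)"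
      by (simp add: trG_def G_def sum_distrib_left power2_eq_square sum.swap[of _ S])
    also have "\<dots> \<le> (1 / real n) * (\<Sum>i<n. \<Sum>j<p. (z i j)^2)"
      unfolding a_def by (intro mult_left_mono sum_mono bessel[OF S on]) auto
    finally show ?thesis .
  qed
  define s where "s = (\<Sum>k\<in>S. (c k)^2)"
  have dk: "d k = G k k + (c k)^2" if "k \<in> S" for k using dG[OF that that] by (simp add: power2_eq_square)
  have main: "(real (card S) - 1) * T \<le> trG"
  proof (cases "s = 0")
    case True
    hence c0: "c k = 0" if "k \<in> S" for k
      using that S by (simp add: s_def sum_nonneg_eq_0_iff)
    have "real (card S) * T = (\<Sum>k\<in>S. T)" by simp
    also have "\<dots> \<le> (\<Sum>k\<in>S. d k)" by (rule sum_mono) (rule big)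
    also have "\<dots> = trG" by (simp add: trG_def dk c0)
    finally show ?thesis using T by (simp add: algebra_simps)
  next
    case False
    have s0: "s > 0" using False by (simp add: s_def sum_nonneg order_le_neq_trans)
    have ck: "(c k)^2 \<le> s" if "k \<in> S" for k
      unfolding s_def by (rule member_le_sum) (use that S in auto)
    have "(real (card S) - 1) * T = (\<Sum>k\<in>S. T * (1 - (c k)^2 / s))"
    proof -
      have "(\<Sum>k\<in>S. T * (1 - (c k)^2 / s)) = T * (real (card S) - (\<Sum>k\<in>S. (c k)^2) / s)"
        by (simp add: sum_distrib_left[symmetric] sum_subtractf sum_divide_distrib)
      also have "(\<Sum>k\<in>S. (c k)^2) = s" by (simp add: s_def)
      finally show ?thesis using s0 by simp
    qed
    also have "\<dots> \<le> (\<Sum>k\<in>S. d k * (1 - (c k)^2 / s))"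
    proof (rule sum_mono)
      fix k assume k: "k \<in> S"
      have "0 \<le> 1 - (c k)^2 / s" using ck[OF k] s0 by simp
      thus "T * (1 - (c k)^2 / s) \<le> d k * (1 - (c k)^2 / s)" using big[OF k] by (rule mult_right_mono[rotated])
    qed
    also have "\<dots> = (\<Sum>k\<in>S. d k) - (\<Sum>k\<in>S. d k * (c k)^2) / s"
      by (simp add: algebra_simps sum_subtractf sum_divide_distrib)
    also have "(\<Sum>k\<in>S. d k) = trG + s" by (simp add: dk sum.distrib trG_def s_def)
    also have "(\<Sum>k\<in>S. d k * (c k)^2) = (\<Sum>k\<in>S. \<Sum>l\<in>S. c k * c l * (G k l + c k * c l))"
    proof -
      have "(\<Sum>k\<in>S. d k * (c k)^2) = (\<Sum>k\<in>S. \<Sum>l\<in>S. c k * c l * (if k = l then d k else 0))"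
        using S by (simp add: power2_eq_square mult_ac if_distrib cong: if_cong)
      also have "\<dots> = (\<Sum>k\<in>S. \<Sum>l\<in>S. c k * c l * (G k l + c k * c l))"
        by (intro sum.cong refl) (simp add: dG)
      finally show ?thesis .
    qed
    also have "\<dots> = (1 / real n) * (\<Sum>i<n. (\<Sum>k\<in>S. c k * a i k)^2) + s^2"
    proof -
      have A1: "(\<Sum>k\<in>S. \<Sum>l\<in>S. c k * c l * G k l) = (1 / real n) * (\<Sum>i<n. (\<Sum>k\<in>S. c k * a i k)^2)"
      proof -
        have "(\<Sum>i<n. (\<Sum>k\<in>S. c k * a i k)^2) = (\<Sum>i<n. \<Sum>k\<in>S. \<Sum>l\<in>S. c k * c l * (a i k * a i l))"
          by (simp add: power2_eq_square sum_product mult_ac)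
        also have "\<dots> = (\<Sum>k\<in>S. \<Sum>i<n. \<Sum>l\<in>S. c k * c l * (a i k * a i l))" by (rule sum.swap)
        also have "\<dots> = (\<Sum>k\<in>S. \<Sum>l\<in>S. \<Sum>i<n. c k * c l * (a i k * a i l))"
          by (intro sum.cong refl sum.swap)
        also have "\<dots> = (\<Sum>k\<in>S. \<Sum>l\<in>S. c k * c l * (\<Sum>i<n. a i k * a i l))"
          by (simp add: sum_distrib_left)
        finally have "(1 / real n) * (\<Sum>i<n. (\<Sum>k\<in>S. c k * a i k)^2)
            = (\<Sum>k\<in>S. \<Sum>l\<in>S. (1 / real n) * (c k * c l * (\<Sum>i<n. a i k * a i l)))"
          by (simp add: sum_distrib_left)
        thus ?thesis by (simp add: G_def mult_ac)
      qed
      have A2: "(\<Sum>k\<in>S. \<Sum>l\<in>S. c k * c l * (c k * c l)) = s^2"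
        by (simp add: s_def power2_eq_square sum_product mult_ac)
      show ?thesis by (simp add: distrib_left sum.distrib A1 A2)
    qed
    finally have F: "(real (card S) - 1) * T \<le> trG + s - ((1 / real n) * (\<Sum>i<n. (\<Sum>k\<in>S. c k * a i k)^2) + s^2) / s" .
    define Qv where "Qv = (1 / real n) * (\<Sum>i<n. (\<Sum>k\<in>S. c k * a i k)^2)"
    have Q0: "0 \<le> Qv" by (simp add: sum_nonneg Qv_def)
    have E: "(Qv + s^2) / s = Qv / s + s" using s0 by (simp add: add_divide_distrib power2_eq_square)
    have "0 \<le> Qv / s" using Q0 s0 by simp
    with F E show ?thesis unfolding Qv_def[symmetric] by linarith
  qed
  show ?thesis using main trG_le by (simp add: z_def rb_def)
qed





lemma sprod_sum: "v \<in> carrier_vec n \<Longrightarrow> w \<in> carrier_vec n \<Longrightarrow> v \<bullet> w = (\<Sum>i<n. v$i * w$i)"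
  by (simp add: scalar_prod_def lessThan_atLeast0)

lemma mult_mat_entry:
  assumes "A \<in> carrier_mat n m" "B \<in> carrier_mat m q" "i < n" "j < q"
  shows "(A * B) $$ (i,j) = (\<Sum>l<m. A$$(i,l) * B$$(l,j))"
  using assms by (auto simp: index_mult_mat scalar_prod_def lessThan_atLeast0 intro!: sum.cong)

lemma mult_mat_vec_entry:
  assumes "A \<in> carrier_mat n m" "v \<in> carrier_vec m" "i < n"
  shows "(A *\<^sub>v v) $ i = (\<Sum>l<m. A$$(i,l) * v$l)"
  using assms by (auto simp: scalar_prod_def lessThan_atLeast0 intro!: sum.cong)

lemma householder:
  fixes u :: "real vec"
  assumes u: "u \<in> carrier_vec n" and uu: "u \<bullet> u = 1" and k: "k < n"
  shows "\<exists>H. H \<in> carrier_mat n n \<and> transpose_mat H = H \<and> H * H = 1\<^sub>m n \<and> col H k = u \<and>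
     (\<forall>z\<in>carrier_vec n. z $ k = 0 \<and> z \<bullet> u = 0 \<longrightarrow> H *\<^sub>v z = z)"
proof (cases "u = unit_vec n k")
  case True
  show ?thesis
    by (rule exI[of _ "1\<^sub>m n"]) (use True k in auto)
next
  case False
  define w where "w = vec n (\<lambda>i. (if i = k then 1 else 0) - u$i)"
  have w: "w \<in> carrier_vec n" by (simp add: w_def)
  have usum: "(\<Sum>i<n. u$i * u$i) = 1" using uu u by (simp add: sprod_sum)
  define ww where "ww = (\<Sum>i<n. (w$i)^2)"
  have ww_eq: "ww = 2 - 2 * u$k"
  proof -
    have "ww = (\<Sum>i<n. (if i = k then 1 - 2 * u$k else 0) + u$i * u$i)"
      unfolding ww_def w_def by (intro sum.cong refl) (auto simp: power2_eq_square algebra_simps)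
    also have "\<dots> = 1 - 2 * u$k + 1" using k usum by (simp add: sum.distrib sum_subtractf)
    finally show ?thesis by simp
  qed
  have "w \<noteq> 0\<^sub>v n"
  proof
    assume "w = 0\<^sub>v n"
    hence "w $ i = 0" if "i < n" for i using that by simp
    hence "\<And>i. i < n \<Longrightarrow> u$i = (if i = k then 1 else 0)"
      by (simp add: w_def)
    hence "u = unit_vec n k" using u by (intro eq_vecI) (auto simp: unit_vec_def)
    thus False using False by simp
  qed
  hence "ww \<noteq> 0"
  proof -
    assume "w \<noteq> 0\<^sub>v n"
    have "\<exists>i<n. w$i \<noteq> 0"
    proof (rule ccontr)
      assume "\<not> (\<exists>i<n. w$i \<noteq> 0)"
      hence "w = 0\<^sub>v n" using w by (intro eq_vecI) auto
      thus False using \<open>w \<noteq> 0\<^sub>v n\<close> by simp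
    qed
    then obtain i where i: "i < n" "w$i \<noteq> 0" by blast
    have "(w$i)^2 \<le> ww" unfolding ww_def by (rule member_le_sum) (use i in auto)
    moreover have "(w$i)^2 > 0" using i by simp
    ultimately show ?thesis using zero_less_power2[of "w$i"] by linarith
  qed
  have uk: "u$k \<noteq> 1" using \<open>ww \<noteq> 0\<close> ww_eq by simp
  define c where "c = 2 / ww"
  define H where "H = mat n n (\<lambda>(i,j). (if i = j then 1 else 0) - c * w$i * w$j)"
  have H: "H \<in> carrier_mat n n" by (simp add: H_def)
  have Hij: "i < n \<Longrightarrow> j < n \<Longrightarrow> H $$ (i,j) = (if i = j then 1 else 0) - c * w$i * w$j" for i j
    by (simp add: H_def)
  have cw: "c * ww = 2" using \<open>ww \<noteq> 0\<close> by (simp add: c_def)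
  have wk: "c * w$k = 1" using k ww_eq uk by (simp add: c_def w_def field_simps)
  have HH: "H * H = 1\<^sub>m n"
  proof (rule eq_matI)
    fix i j assume i: "i < dim_row (1\<^sub>m n)" and j: "j < dim_col (1\<^sub>m n)"
    hence i: "i < n" and j: "j < n" by auto
    have "(H * H) $$ (i,j) = (\<Sum>l<n. H$$(i,l) * H$$(l,j))"
      by (rule mult_mat_entry[OF H H i j])
    also have "\<dots> = (\<Sum>l<n. (if l = i then (if l = j then 1 else 0) else 0)
        - (if l = j then c * w$i * w$l else 0) - (if l = i then c * w$j * w$l else 0)
        + (c * c * w$i * w$j) * (w$l)^2)"
      by (intro sum.cong refl) (simp add: Hij i j algebra_simps power2_eq_square)
    also have "\<dots> = (if i = j then 1 else 0) - c * w$i * w$j - c * w$j * w$i + (c * c * w$i * w$j) * ww"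
      using i j by (simp only: sum.distrib sum_subtractf sum_distrib_left[symmetric] ww_def sum.delta finite_lessThan lessThan_iff if_True)
    also have "\<dots> = (if i = j then 1 else 0) - c * w$i * w$j - c * w$j * w$i + c * (c * ww) * w$i * w$j"
      by (simp add: mult_ac)
    also have "\<dots> = (1\<^sub>m n) $$ (i,j)" using i j cw by simp
    finally show "(H * H) $$ (i,j) = (1\<^sub>m n) $$ (i,j)" .
  qed (use H in auto)
  have HT: "transpose_mat H = H"
    by (rule eq_matI) (use H in \<open>auto simp: Hij\<close>)
  have colk: "col H k = u"
  proof (rule eq_vecI)
    fix i assume "i < dim_vec u"
    hence i: "i < n" using u by simp
    have "col H k $ i = (if i = k then 1 else 0) - (c * w$k) * w$i" using i k H by (simp add: Hij)
    also have "\<dots> = u $ i" using wk i by (simp add: w_def)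
    finally show "col H k $ i = u $ i" .
  qed (use H u in auto)
  have hfix: "H *\<^sub>v z = z" if z: "z \<in> carrier_vec n" "z $ k = 0" "z \<bullet> u = 0" for z
  proof -
    have wz: "(\<Sum>j<n. w$j * z$j) = 0"
    proof -
      have "(\<Sum>j<n. w$j * z$j) = (\<Sum>j<n. (if j = k then z$j else 0)) - (\<Sum>j<n. u$j * z$j)"
      proof -
        have "(\<Sum>j<n. w$j * z$j) = (\<Sum>j<n. (if j = k then z$j else 0) - u$j * z$j)"
          by (intro sum.cong refl) (simp add: w_def algebra_simps)
        thus ?thesis by (simp only: sum_subtractf)
      qed
      also have "(\<Sum>j<n. u$j * z$j) = 0" using z u by (simp add: sprod_sum mult.commute)
      finally show ?thesis using z k by simp
    qed
    show ?thesis
    proof (rule eq_vecI)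
      fix i assume "i < dim_vec z"
      hence i: "i < n" using z by simp
      have "(H *\<^sub>v z) $ i = (\<Sum>j<n. H$$(i,j) * z$j)" by (rule mult_mat_vec_entry[OF H z(1) i])
      also have "\<dots> = (\<Sum>j<n. (if i = j then z$j else 0)) - c * w$i * (\<Sum>j<n. w$j * z$j)"
      proof -
        have "(\<Sum>j<n. H$$(i,j) * z$j) = (\<Sum>j<n. (if i = j then z$j else 0) - c * w$i * (w$j * z$j))"
          by (intro sum.cong refl) (simp add: Hij i algebra_simps)
        thus ?thesis by (simp only: sum_subtractf sum_distrib_left)
      qed
      also have "\<dots> = z$i" using i wz by simp
      finally show "(H *\<^sub>v z) $ i = z $ i" .
    qed (use H z in auto)
  qed
  show ?thesis using H HT HH colk hfix by blast
qed


definition orthm :: "nat \<Rightarrow> real mat \<Rightarrow> bool" where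
  "orthm n Q \<longleftrightarrow> Q \<in> carrier_mat n n \<and> transpose_mat Q * Q = 1\<^sub>m n \<and> Q * transpose_mat Q = 1\<^sub>m n"

lemma sum_shift_zero:
  fixes f :: "nat \<Rightarrow> 'b::comm_monoid_add"
  assumes "k \<le> n" "\<And>j. j < k \<Longrightarrow> f j = 0"
  shows "(\<Sum>j<n. f j) = (\<Sum>j<n-k. f (j+k))"
proof -
  have "(\<Sum>j<n. f j) = (\<Sum>j\<in>{..<k}. f j) + (\<Sum>j\<in>{k..<n}. f j)"
    using assms(1) by (metis atLeast0LessThan sum.atLeastLessThan_concat zero_le)
  also have "(\<Sum>j\<in>{..<k}. f j) = 0" using assms(2) by simp
  also have "{k..<n} = (\<lambda>j. j + k) ` {..<n-k}"
    using image_add_atLeastLessThan'[of k 0 "n-k"] assms(1) by (simp add: lessThan_atLeast0)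
  also have "(\<Sum>j\<in>(\<lambda>j. j + k) ` {..<n-k}. f j) = (\<Sum>j<n-k. f (j+k))"
    by (subst sum.reindex) (auto simp: inj_on_def)
  finally show ?thesis by simp
qed

lemma col_as_mult: assumes H: "(H :: 'a :: comm_ring_1 mat) \<in> carrier_mat n n" and j: "j < n" shows "col H j = H *\<^sub>v unit_vec n j"
proof (rule eq_vecI)
  fix i assume "i < dim_vec (H *\<^sub>v unit_vec n j)"
  hence i: "i < n" using H by simp
  have "(H *\<^sub>v unit_vec n j) $ i = (\<Sum>l<n. H$$(i,l) * unit_vec n j $ l)"
    by (rule mult_mat_vec_entry[OF H _ i]) simp
  also have "\<dots> = (\<Sum>l<n. if l = j then H$$(i,j) else 0)"
    by (intro sum.cong refl) (auto simp: unit_vec_def)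
  also have "\<dots> = H$$(i,j)" using j by simp
  finally show "col H j $ i = (H *\<^sub>v unit_vec n j) $ i" using i j H by simp
qed (use H in auto)

lemma spectral_ind:
  fixes A :: "real mat"
  assumes A: "A \<in> carrier_mat n n" and As: "transpose_mat A = A"
  shows "k \<le> n \<Longrightarrow> \<exists>Q. orthm n Q \<and>
     (\<forall>i<n. \<forall>j<n. (i < k \<or> j < k) \<and> i \<noteq> j \<longrightarrow> (transpose_mat Q * A * Q) $$ (i,j) = 0)"
proof (induction k)
  case 0
  show ?case by (intro exI[of _ "1\<^sub>m n"]) (use A in \<open>auto simp: orthm_def\<close>)
next
  case (Suc k)
  then obtain Q where Q: "orthm n Q"
    and Qz: "\<forall>i<n. \<forall>j<n. (i < k \<or> j < k) \<and> i \<noteq> j \<longrightarrow> (transpose_mat Q * A * Q) $$ (i,j) = 0"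
    and k: "k < n" by auto
  have Qc: "Q \<in> carrier_mat n n" and QTQ: "transpose_mat Q * Q = 1\<^sub>m n" and QQT: "Q * transpose_mat Q = 1\<^sub>m n"
    using Q by (auto simp: orthm_def)
  have QTc: "transpose_mat Q \<in> carrier_mat n n" using Qc by simp
  define B where "B = transpose_mat Q * A * Q"
  have Bc: "B \<in> carrier_mat n n" using Qc A by (simp add: B_def)
  have BT: "transpose_mat B = B"
  proof -
    have "transpose_mat B = transpose_mat Q * transpose_mat (transpose_mat Q * A)"
      unfolding B_def by (rule transpose_mult[of "transpose_mat Q * A" n n Q n]) (use A QTc Qc in auto)
    also have "transpose_mat (transpose_mat Q * A) = transpose_mat A * Q"
      using transpose_mult[OF QTc A] by simp
    also have "transpose_mat Q * (transpose_mat A * Q) = B"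
      unfolding B_def As by (rule assoc_mult_mat[symmetric, OF QTc A Qc])
    finally show ?thesis .
  qed
  have Bsym: "B $$ (i,j) = B $$ (j,i)" if "i < n" "j < n" for i j
    using arg_cong[OF BT, of "\<lambda>M. M $$ (i,j)"] that Bc by simp
  have Bz: "B $$ (i,j) = 0" if "i < n" "j < n" "i < k \<or> j < k" "i \<noteq> j" for i j
    using Qz that unfolding B_def by blast
  define S where "S = mat (n-k) (n-k) (\<lambda>(i,j). B $$ (i+k, j+k))"
  have Sc: "S \<in> carrier_mat (n-k) (n-k)" by (simp add: S_def)
  obtain l y where y: "y \<in> carrier_vec (n-k)" "y \<noteq> 0\<^sub>v (n-k)" "S *\<^sub>v y = l \<cdot>\<^sub>v y"
    using sym_real_eigvec[OF Sc] k Bsym by (auto simp: S_def)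
  define x where "x = vec n (\<lambda>i. if i < k then 0 else y $ (i-k))"
  have xc: "x \<in> carrier_vec n" by (simp add: x_def)
  have "\<exists>i<n-k. y$i \<noteq> 0"
  proof (rule ccontr)
    assume "\<not> (\<exists>i<n-k. y$i \<noteq> 0)"
    hence "y = 0\<^sub>v (n-k)" using y(1) by (intro eq_vecI) auto
    thus False using y(2) by simp
  qed
  then obtain i0 where i0: "i0 < n-k" "y $ i0 \<noteq> 0" by blast
  have xi0: "x $ (i0+k) = y $ i0" using i0 by (simp add: x_def)
  have Bx: "B *\<^sub>v x = l \<cdot>\<^sub>v x"
  proof (rule eq_vecI)
    fix i assume "i < dim_vec (l \<cdot>\<^sub>v x)"
    hence i: "i < n" by (simp add: x_def)
    have "(B *\<^sub>v x) $ i = (\<Sum>j<n. B$$(i,j) * x$j)" by (rule mult_mat_vec_entry[OF Bc xc i])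
    also have "\<dots> = (\<Sum>j<n-k. B$$(i,j+k) * y$j)"
      by (subst sum_shift_zero[of k]) (use k in \<open>auto simp: x_def\<close>)
    also have "\<dots> = (l \<cdot>\<^sub>v x) $ i"
    proof (cases "i < k")
      case True
      have "(\<Sum>j<n-k. B$$(i,j+k) * y$j) = 0"
        by (rule sum.neutral) (use True i in \<open>auto simp: Bz\<close>)
      thus ?thesis using True i by (simp add: x_def)
    next
      case False
      have "(\<Sum>j<n-k. B$$(i,j+k) * y$j) = (S *\<^sub>v y) $ (i-k)"
        using False i by (subst mult_mat_vec_entry[OF Sc y(1)]) (auto simp: S_def intro!: sum.cong)
      also have "\<dots> = l * y $ (i-k)" using y False i by simp
      finally show ?thesis using False i by (simp add: x_def)
    qed
    finally show "(B *\<^sub>v x) $ i = (l \<cdot>\<^sub>v x) $ i" .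
  qed (use Bc in \<open>simp add: x_def\<close>)
  have xx: "x \<bullet> x > 0"
  proof -
    have "x \<bullet> x = (\<Sum>j<n. (x$j)^2)" using xc by (simp add: sprod_sum power2_eq_square)
    also have "\<dots> \<ge> (x$(i0+k))^2" by (rule member_le_sum) (use i0 in auto)
    finally show ?thesis using xi0 i0 by (smt (verit) zero_less_power2)
  qed
  define a where "a = 1 / sqrt (x \<bullet> x)"
  define u where "u = a \<cdot>\<^sub>v x"
  have uc: "u \<in> carrier_vec n" using xc by (simp add: u_def)
  have uu: "u \<bullet> u = 1"
  proof -
    have "u \<bullet> u = a * a * (x \<bullet> x)" unfolding u_def using xc
      by (simp add: smult_scalar_prod_distrib scalar_prod_smult_distrib)
    also have "\<dots> = 1" using xx by (simp add: a_def)
    finally show ?thesis .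
  qed
  have Bu: "B *\<^sub>v u = l \<cdot>\<^sub>v u"
    unfolding u_def using Bx Bc xc by (simp add: mult_mat_vec smult_smult_assoc mult.commute)
  have u0: "u $ i = 0" if "i < k" for i using that k by (simp add: u_def x_def)
  obtain H where Hc: "H \<in> carrier_mat n n" and HT: "transpose_mat H = H" and HH: "H * H = 1\<^sub>m n"
    and colk: "col H k = u" and hfix: "\<And>z. z \<in> carrier_vec n \<Longrightarrow> z $ k = 0 \<Longrightarrow> z \<bullet> u = 0 \<Longrightarrow> H *\<^sub>v z = z"
    using householder[OF uc uu k] by blast
  have Hsym: "H $$ (i,j) = H $$ (j,i)" if "i < n" "j < n" for i j
    using arg_cong[OF HT, of "\<lambda>M. M $$ (i,j)"] that Hc by simp
  have Hj: "H $$ (i,j) = (if i = j then 1 else 0)" if "i < n" "j < k" for i j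
  proof -
    have jn: "j < n" using that k by simp
    have ue: "unit_vec n j \<bullet> u = 0" using scalar_prod_left_unit[OF uc jn] u0[OF that(2)] by simp
    have ek: "unit_vec n j $ k = 0" using that k by simp
    have "H *\<^sub>v unit_vec n j = unit_vec n j"
      by (rule hfix[OF _ ek ue]) simp
    hence "col H j = unit_vec n j" using col_as_mult[OF Hc jn] by simp
    hence "col H j $ i = unit_vec n j $ i" by simp
    thus ?thesis using that jn Hc by (simp add: unit_vec_def)
  qed
  have Hk: "H $$ (i,k) = u $ i" if "i < n" for i
    using arg_cong[OF colk, of "\<lambda>v. v $ i"] that k Hc by simp
  define Q' where "Q' = Q * H"
  have Q'c: "Q' \<in> carrier_mat n n" using Qc Hc by (simp add: Q'_def)
  have TQ': "transpose_mat Q' = H * transpose_mat Q"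
    unfolding Q'_def using transpose_mult[OF Qc Hc] HT by simp
  have QHc: "Q * H \<in> carrier_mat n n" using Qc Hc by simp
  have orth': "orthm n Q'"
  proof -
    have "transpose_mat Q' * Q' = H * (transpose_mat Q * (Q * H))"
      unfolding TQ' unfolding Q'_def by (rule assoc_mult_mat[OF Hc QTc QHc])
    also have "transpose_mat Q * (Q * H) = (transpose_mat Q * Q) * H"
      by (rule assoc_mult_mat[symmetric, OF QTc Qc Hc])
    also have "H * ((transpose_mat Q * Q) * H) = 1\<^sub>m n" using QTQ HH Hc by simp
    finally have 1: "transpose_mat Q' * Q' = 1\<^sub>m n" .
    have HQTc: "H * transpose_mat Q \<in> carrier_mat n n" using Hc QTc by simp
    have "Q' * transpose_mat Q' = Q * (H * (H * transpose_mat Q))"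
      unfolding TQ' unfolding Q'_def by (rule assoc_mult_mat[OF Qc Hc HQTc])
    also have "H * (H * transpose_mat Q) = (H * H) * transpose_mat Q"
      by (rule assoc_mult_mat[symmetric, OF Hc Hc QTc])
    also have "Q * ((H * H) * transpose_mat Q) = 1\<^sub>m n" using QQT HH QTc by simp
    finally have 2: "Q' * transpose_mat Q' = 1\<^sub>m n" .
    show ?thesis using 1 2 Q'c by (simp add: orthm_def)
  qed
  have B'eq: "transpose_mat Q' * A * Q' = H * B * H"
  proof -
    have QTAc: "transpose_mat Q * A \<in> carrier_mat n n" using QTc A by simp
    have "transpose_mat Q' * A * Q' = H * transpose_mat Q * A * (Q * H)" unfolding TQ' unfolding Q'_def ..
    also have "H * transpose_mat Q * A = H * (transpose_mat Q * A)"
      by (rule assoc_mult_mat[OF Hc QTc A])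
    also have "H * (transpose_mat Q * A) * (Q * H) = H * ((transpose_mat Q * A) * (Q * H))"
      by (rule assoc_mult_mat[OF Hc QTAc QHc])
    also have "(transpose_mat Q * A) * (Q * H) = (transpose_mat Q * A * Q) * H"
      by (rule assoc_mult_mat[symmetric, OF QTAc Qc Hc])
    also have "H * ((transpose_mat Q * A * Q) * H) = H * B * H"
      unfolding B_def by (rule assoc_mult_mat[symmetric, OF Hc _ Hc]) (use Bc in \<open>simp add: B_def\<close>)
    finally show ?thesis .
  qed
  define B' where "B' = H * B * H"
  have B'c: "B' \<in> carrier_mat n n" using Hc Bc by (simp add: B'_def)
  have B'T: "transpose_mat B' = B'"
  proof -
    have "transpose_mat B' = transpose_mat H * transpose_mat (H * B)"
      unfolding B'_def by (rule transpose_mult[of "H * B" n n H n]) (use Hc Bc in auto)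
    also have "transpose_mat (H * B) = transpose_mat B * transpose_mat H"
      by (rule transpose_mult[OF Hc Bc])
    also have "transpose_mat H * (transpose_mat B * transpose_mat H) = B'"
      unfolding B'_def HT BT by (rule assoc_mult_mat[symmetric, OF Hc Bc Hc])
    finally show ?thesis .
  qed
  have B'entry: "B' $$ (i,j) = (\<Sum>b<n. (\<Sum>a<n. H$$(i,a) * B$$(a,b)) * H$$(b,j))" if "i < n" "j < n" for i j
  proof -
    have "B' $$ (i,j) = (\<Sum>b<n. (H * B) $$ (i,b) * H$$(b,j))"
      unfolding B'_def by (rule mult_mat_entry[of "H * B" n n H n]) (use Hc Bc that in auto)
    also have "\<dots> = (\<Sum>b<n. (\<Sum>a<n. H$$(i,a) * B$$(a,b)) * H$$(b,j))"
      by (intro sum.cong refl) (use that in \<open>simp add: mult_mat_entry[OF Hc Bc]\<close>)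
    finally show ?thesis .
  qed
  have B'z: "B' $$ (i,j) = 0" if ij: "i < n" "j < n" "j \<le> k" "i \<noteq> j" for i j
  proof (cases "j < k")
    case True
    have "B' $$ (i,j) = (\<Sum>b<n. (if b = j then (\<Sum>a<n. H$$(i,a) * B$$(a,b)) else 0))"
      unfolding B'entry[OF ij(1,2)] by (intro sum.cong refl) (use True in \<open>simp add: Hj\<close>)
    also have "\<dots> = (\<Sum>a<n. H$$(i,a) * B$$(a,j))" using ij by simp
    also have "\<dots> = (\<Sum>a<n. if a = j then H$$(i,j) * B$$(j,j) else 0)"
      by (intro sum.cong refl) (use True ij in \<open>auto simp: Bz\<close>)
    also have "\<dots> = H$$(i,j) * B$$(j,j)" using ij by simp
    also have "H$$(i,j) = 0" using Hj[OF ij(1) True] ij by simp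
    finally show ?thesis by simp
  next
    case False
    hence jk: "j = k" using ij by simp
    have "B' $$ (i,j) = (\<Sum>b<n. \<Sum>a<n. H$$(i,a) * B$$(a,b) * u$b)"
      unfolding B'entry[OF ij(1,2)] by (intro sum.cong refl) (simp add: Hk jk sum_distrib_right)
    also have "\<dots> = (\<Sum>a<n. H$$(i,a) * (\<Sum>b<n. B$$(a,b) * u$b))"
      by (subst sum.swap) (simp add: sum_distrib_left mult.assoc)
    also have "\<dots> = (\<Sum>a<n. H$$(i,a) * (l * u$a))"
    proof (intro sum.cong refl)
      fix a assume "a \<in> {..<n}"
      hence "(\<Sum>b<n. B$$(a,b) * u$b) = (B *\<^sub>v u) $ a" using mult_mat_vec_entry[OF Bc uc] by simp
      also have "\<dots> = l * u$a" using Bu \<open>a \<in> {..<n}\<close> uc by simp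
      finally show "H$$(i,a) * (\<Sum>b<n. B$$(a,b) * u$b) = H$$(i,a) * (l * u$a)" by simp
    qed
    also have "\<dots> = l * (\<Sum>a<n. H$$(i,a) * H$$(a,k))"
      by (simp add: sum_distrib_left Hk k mult_ac)
    also have "(\<Sum>a<n. H$$(i,a) * H$$(a,k)) = (H * H) $$ (i,k)"
      using mult_mat_entry[OF Hc Hc ij(1) k] by simp
    also have "\<dots> = 0" using HH ij jk k by simp
    finally show ?thesis by simp
  qed
  have B'sym: "B' $$ (i,j) = B' $$ (j,i)" if "i < n" "j < n" for i j
    using arg_cong[OF B'T, of "\<lambda>M. M $$ (i,j)"] that B'c by simp
  show ?case
  proof (intro exI[of _ Q'] conjI allI impI orth')
    fix i j assume ij: "i < n" "j < n" "(i < Suc k \<or> j < Suc k) \<and> i \<noteq> j"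
    have eqB: "transpose_mat Q' * A * Q' = B'" using B'eq B'_def by simp
    show "(transpose_mat Q' * A * Q') $$ (i,j) = 0"
    proof (cases "j < Suc k")
      case True thus ?thesis using B'z ij by (simp add: eqB)
    next
      case False
      hence "i < Suc k" using ij by simp
      thus ?thesis using B'z[of j i] B'sym ij by (simp add: eqB)
    qed
  qed
qed

lemma spectral:
  fixes A :: "real mat"
  assumes A: "A \<in> carrier_mat n n" and As: "transpose_mat A = A"
  shows "\<exists>Q. orthm n Q \<and> (\<forall>i<n. \<forall>j<n. i \<noteq> j \<longrightarrow> (transpose_mat Q * A * Q) $$ (i,j) = 0)"
  using spectral_ind[OF A As, of n] by auto




lemma proots_linear_prod:
  "proots (\<Prod>a\<leftarrow>xs. [:- a, 1:]) = mset (xs :: real list)"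
proof (induction xs)
  case Nil thus ?case by simp
next
  case (Cons a xs)
  have "proots (\<Prod>a\<leftarrow>a # xs. [:- a, 1:]) = proots ([:- a, 1:] * (\<Prod>a\<leftarrow>xs. [:- a, 1:]))" by simp
  also have "\<dots> = proots [:- a, 1:] + proots (\<Prod>a\<leftarrow>xs. [:- a, 1:])"
    by (rule proots_mult) (auto simp: prod_list_zero_iff)
  also have "\<dots> = {#a#} + mset xs" using Cons proots_linear_factor[of "-a"] by simp
  finally show ?case by simp
qed

lemma dsum: "(\<Sum>a\<in>A. \<Sum>b\<in>B. c * (X a * Y b)) = (c::real) * ((\<Sum>a\<in>A. X a) * (\<Sum>b\<in>B. Y b))"
  by (simp only: sum_product[symmetric] sum_distrib_left[symmetric] sum_distrib_right[symmetric])

lemma sample_mat_spectral: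
  fixes r :: "nat \<Rightarrow> nat \<Rightarrow> real"
  shows "\<exists>d e. proots (char_poly (sample_mat p n r)) = mset (map d [0..<p]) \<and>
     (\<forall>k<p. \<forall>l<p. ip p (e k) (e l) = (if k = l then 1 else 0)) \<and>
     (\<forall>k<p. \<forall>l<p. (1 / real n) * (\<Sum>i<n. ip p (e k) (r i) * ip p (e l) (r i)) = (if k = l then d k else 0))"
proof -
  define A where "A = sample_mat p n r"
  have Ac: "A \<in> carrier_mat p p" by (simp add: A_def sample_mat_def)
  have Aij: "A $$ (a,b) = (1 / real n) * (\<Sum>i<n. r i a * r i b)" if "a < p" "b < p" for a b
    using that by (simp add: A_def sample_mat_def)
  have AT: "transpose_mat A = A"
    by (rule eq_matI) (use Ac in \<open>auto simp: Aij mult.commute\<close>)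
  obtain Q where Q: "orthm p Q" and Dz: "\<forall>i<p. \<forall>j<p. i \<noteq> j \<longrightarrow> (transpose_mat Q * A * Q) $$ (i,j) = 0"
    using spectral[OF Ac AT] by blast
  have Qc: "Q \<in> carrier_mat p p" and QTQ: "transpose_mat Q * Q = 1\<^sub>m p" and QQT: "Q * transpose_mat Q = 1\<^sub>m p"
    using Q by (auto simp: orthm_def)
  have QTc: "transpose_mat Q \<in> carrier_mat p p" using Qc by simp
  define D where "D = transpose_mat Q * A * Q"
  have Dc: "D \<in> carrier_mat p p" using Qc Ac by (simp add: D_def)
  have sim: "similar_mat A D"
  proof -
    have QTAc: "transpose_mat Q * A \<in> carrier_mat p p" using QTc Ac by simp
    have QDc: "Q * D \<in> carrier_mat p p" using Qc Dc by simp
    have "Q * D * transpose_mat Q = Q * (transpose_mat Q * A * Q) * transpose_mat Q" by (simp add: D_def)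
    also have "Q * (transpose_mat Q * A * Q) = (Q * (transpose_mat Q * A)) * Q"
      by (rule assoc_mult_mat[symmetric, OF Qc QTAc Qc])
    also have "Q * (transpose_mat Q * A) = (Q * transpose_mat Q) * A"
      by (rule assoc_mult_mat[symmetric, OF Qc QTc Ac])
    also have "(Q * transpose_mat Q) * A = A" using QQT Ac by simp
    also have "A * Q * transpose_mat Q = A * (Q * transpose_mat Q)"
      by (rule assoc_mult_mat[OF Ac Qc QTc])
    also have "\<dots> = A" using QQT Ac by simp
    finally have "A = Q * D * transpose_mat Q" by simp
    hence "similar_mat_wit A D Q (transpose_mat Q)"
      unfolding similar_mat_wit_def using Ac Dc Qc QTc QQT QTQ by (auto simp: Let_def)
    thus ?thesis unfolding similar_mat_def by blast
  qed
  have ut: "upper_triangular D"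
    unfolding upper_triangular_def using Dz Dc by (auto simp: D_def)
  define d where "d k = D $$ (k,k)" for k
  have "char_poly A = (\<Prod>a\<leftarrow>diag_mat D. [:- a, 1:])"
    using char_poly_similar[OF sim] char_poly_upper_triangular[OF Dc ut] by simp
  moreover have "diag_mat D = map d [0..<p]"
    using Dc by (simp add: diag_mat_def d_def)
  ultimately have "char_poly A = (\<Prod>a\<leftarrow>map d [0..<p]. [:- a, 1:])" by simp
  hence cp: "proots (char_poly A) = mset (map d [0..<p])"
    using proots_linear_prod[of "map d [0..<p]"] by argo
  define e where "e k j = Q $$ (j,k)" for k j
  have on: "ip p (e k) (e l) = (if k = l then 1 else 0)" if "k < p" "l < p" for k l
  proof -
    have "(transpose_mat Q * Q) $$ (k,l) = (\<Sum>j<p. transpose_mat Q $$ (k,j) * Q $$ (j,l))"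
      by (rule mult_mat_entry[OF QTc Qc that])
    also have "\<dots> = ip p (e k) (e l)" unfolding ip_def e_def
      by (intro sum.cong refl) (use that Qc in simp)
    finally show ?thesis using QTQ that by simp
  qed
  have quad: "(1 / real n) * (\<Sum>i<n. ip p (e k) (r i) * ip p (e l) (r i)) = (if k = l then d k else 0)"
    if kl: "k < p" "l < p" for k l
  proof -
    have "D $$ (k,l) = (\<Sum>b<p. (transpose_mat Q * A) $$ (k,b) * Q $$ (b,l))"
      unfolding D_def by (rule mult_mat_entry[of _ p p _ p]) (use QTc Ac Qc kl in auto)
    also have "\<dots> = (\<Sum>b<p. (\<Sum>a<p. Q $$ (a,k) * A $$ (a,b)) * Q $$ (b,l))"
      by (intro sum.cong refl) (use kl Qc in \<open>simp add: mult_mat_entry[OF QTc Ac]\<close>)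
    also have "\<dots> = (\<Sum>b<p. \<Sum>a<p. \<Sum>i<n. (1 / real n) * ((Q $$ (a,k) * r i a) * (Q $$ (b,l) * r i b)))"
      by (intro sum.cong refl) (simp add: Aij sum_distrib_left sum_distrib_right mult_ac)
    also have "\<dots> = (\<Sum>a<p. \<Sum>b<p. \<Sum>i<n. (1 / real n) * ((Q $$ (a,k) * r i a) * (Q $$ (b,l) * r i b)))"
      by (rule sum.swap)
    also have "\<dots> = (\<Sum>a<p. \<Sum>i<n. \<Sum>b<p. (1 / real n) * ((Q $$ (a,k) * r i a) * (Q $$ (b,l) * r i b)))"
      by (intro sum.cong refl sum.swap)
    also have "\<dots> = (\<Sum>i<n. \<Sum>a<p. \<Sum>b<p. (1 / real n) * ((Q $$ (a,k) * r i a) * (Q $$ (b,l) * r i b)))"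
      by (rule sum.swap)
    also have "\<dots> = (\<Sum>i<n. (1 / real n) * (ip p (e k) (r i) * ip p (e l) (r i)))"
      unfolding ip_def e_def by (intro sum.cong refl dsum)
    also have "\<dots> = (1 / real n) * (\<Sum>i<n. ip p (e k) (r i) * ip p (e l) (r i))"
      by (simp only: sum_distrib_left)
    finally have "D $$ (k,l) = (1 / real n) * (\<Sum>i<n. ip p (e k) (r i) * ip p (e l) (r i))" .
    moreover have "D $$ (k,l) = (if k = l then d k else 0)"
      using Dz kl by (auto simp: d_def D_def)
    ultimately show ?thesis by simp
  qed
  show ?thesis using cp on quad unfolding A_def by blast
qed





lemma spec_measure:
  assumes pr: "proots (char_poly A) = mset (map d [0..<p])" and p: "p > 0" and X: "X \<in> sets borel"
  shows "measure (spectral_distribution A) X = real (card {k\<in>{..<p}. d k \<in> X}) / real p"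
proof -
  have P: "pmf_of_multiset (mset (map d [0..<p])) = map_pmf d (pmf_of_set {..<p})"
    using p by (subst map_pmf_of_set) (auto simp: lessThan_atLeast0 mset_map)
  have "measure (spectral_distribution A) X = measure (measure_pmf (pmf_of_multiset (mset (map d [0..<p])))) X"
    unfolding spectral_distribution_def pr using X by (subst measure_distr) auto
  also have "\<dots> = measure (measure_pmf (pmf_of_set {..<p})) (d -` X)" unfolding P by simp
  also have "\<dots> = real (card ({..<p} \<inter> d -` X)) / real (card {..<p})"
    using p by (subst measure_pmf_of_set) auto
  also have "{..<p} \<inter> d -` X = {k\<in>{..<p}. d k \<in> X}" by auto
  finally show ?thesis by simp
qed

lemma spec_real_distribution: "real_distribution (spectral_distribution A)"
  unfolding spectral_distribution_def real_distribution_def real_distribution_axioms_def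
  by (auto intro!: prob_space.prob_space_distr prob_space_measure_pmf)

lemma var_le_1d:
  fixes a :: "nat \<Rightarrow> real"
  shows "(\<Sum>i<n. (a i - (1 / real n) * (\<Sum>i'<n. a i'))^2) \<le> (\<Sum>i<n. (a i - m)^2)"
proof (cases "n = 0")
  case True thus ?thesis by simp
next
  case False
  define ab where "ab = (1 / real n) * (\<Sum>i'<n. a i')"
  have z: "(\<Sum>i<n. a i - ab) = 0" using False by (simp add: sum_subtractf ab_def)
  have "(\<Sum>i<n. (a i - m)^2) = (\<Sum>i<n. (a i - ab)^2 + 2 * (ab - m) * (a i - ab) + (ab - m)^2)"
    by (intro sum.cong refl) (simp add: power2_eq_square algebra_simps)
  also have "\<dots> = (\<Sum>i<n. (a i - ab)^2) + 2 * (ab - m) * (\<Sum>i<n. a i - ab) + real n * (ab - m)^2"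
    by (simp add: sum.distrib sum_distrib_left)
  finally show ?thesis using z by (simp add: ab_def)
qed

lemma var_le:
  fixes r :: "nat \<Rightarrow> nat \<Rightarrow> real"
  shows "(\<Sum>i<n. \<Sum>j<p. (r i j - (1 / real n) * (\<Sum>i'<n. r i' j))^2) \<le> (\<Sum>i<n. \<Sum>j<p. (r i j - m j)^2)"
proof -
  have "(\<Sum>i<n. \<Sum>j<p. (r i j - (1 / real n) * (\<Sum>i'<n. r i' j))^2)
      = (\<Sum>j<p. \<Sum>i<n. (r i j - (1 / real n) * (\<Sum>i'<n. r i' j))^2)" by (rule sum.swap)
  also have "\<dots> \<le> (\<Sum>j<p. \<Sum>i<n. (r i j - m j)^2)"
    by (intro sum_mono var_le_1d)
  also have "\<dots> = (\<Sum>i<n. \<Sum>j<p. (r i j - m j)^2)" by (rule sum.swap)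
  finally show ?thesis .
qed

lemma eig_count:
  fixes r :: "nat \<Rightarrow> nat \<Rightarrow> real" and e :: "nat \<Rightarrow> nat \<Rightarrow> real"
  assumes on: "\<forall>k<p. \<forall>l<p. ip p (e k) (e l) = (if k = l then 1 else 0)"
    and quad: "\<forall>k<p. \<forall>l<p. (1 / real n) * (\<Sum>i<n. ip p (e k) (r i) * ip p (e l) (r i)) = (if k = l then d k else 0)"
    and T: "T > 0" and L: "L \<ge> 0" and bd: "\<forall>i<n. (\<Sum>j<p. (r i j - m j)^2) \<le> L * real p"
  shows "real (card {k\<in>{..<p}. T < d k}) \<le> 1 + L * real p / T"
proof (cases "n = 0")
  case True
  have "d k = 0" if "k < p" for k using quad[rule_format, OF that that] True by simp
  hence E: "{k\<in>{..<p}. T < d k} = {}" using T by auto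
  have "0 \<le> L * real p / T" using L T by simp
  thus ?thesis unfolding E by simp
next
  case False
  define S where "S = {k\<in>{..<p}. T < d k}"
  have "(real (card S) - 1) * T \<le> (1 / real n) * (\<Sum>i<n. \<Sum>j<p. (r i j - (1 / real n) * (\<Sum>i'<n. r i' j))^2)"
    by (rule count_core[where e = e and d = d]) (use on quad T False in \<open>auto simp: S_def\<close>)
  also have "\<dots> \<le> (1 / real n) * (\<Sum>i<n. \<Sum>j<p. (r i j - m j)^2)"
    by (intro mult_left_mono var_le) auto
  also have "\<dots> \<le> (1 / real n) * (\<Sum>i<n. L * real p)"
    by (intro mult_left_mono sum_mono) (use bd in auto)
  also have "\<dots> = L * real p" using False by simp
  finally have "(real (card S) - 1) * T \<le> L * real p" .
  hence "real (card S) - 1 \<le> L * real p / T" using T by (simp add: field_simps)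
  thus ?thesis by (simp add: S_def)
qed


lemma tight_crit:
  fixes rr :: "nat \<Rightarrow> nat \<Rightarrow> nat \<Rightarrow> real" and nn :: "nat \<Rightarrow> nat" and mu :: "nat \<Rightarrow> nat \<Rightarrow> real"
  assumes L: "0 \<le> L" and bd: "\<forall>p\<ge>P0. \<forall>i<nn p. (\<Sum>j<p. (rr p i j - mu p j)^2) \<le> L * real p"
  shows "tight (\<lambda>k. spectral_distribution (sample_mat (Suc k) (nn (Suc k)) (rr (Suc k))))"
proof -
  have "\<forall>p. \<exists>d e. proots (char_poly (sample_mat p (nn p) (rr p))) = mset (map d [0..<p]) \<and>
     (\<forall>k<p. \<forall>l<p. ip p (e k) (e l) = (if k = l then 1 else 0)) \<and>
     (\<forall>k<p. \<forall>l<p. (1 / real (nn p)) * (\<Sum>i<nn p. ip p (e k) (rr p i) * ip p (e l) (rr p i)) = (if k = l then d k else 0))"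
    using sample_mat_spectral by blast
  then obtain D where "\<forall>p. \<exists>e. proots (char_poly (sample_mat p (nn p) (rr p))) = mset (map (D p) [0..<p]) \<and>
     (\<forall>k<p. \<forall>l<p. ip p (e k) (e l) = (if k = l then 1 else 0)) \<and>
     (\<forall>k<p. \<forall>l<p. (1 / real (nn p)) * (\<Sum>i<nn p. ip p (e k) (rr p i) * ip p (e l) (rr p i)) = (if k = l then D p k else 0))"
    by (rule choice_iff[THEN iffD1, THEN exE]) (rule that)
  then obtain E where DE0: "\<forall>p. proots (char_poly (sample_mat p (nn p) (rr p))) = mset (map (D p) [0..<p]) \<and>
     (\<forall>k<p. \<forall>l<p. ip p (E p k) (E p l) = (if k = l then 1 else 0)) \<and>
     (\<forall>k<p. \<forall>l<p. (1 / real (nn p)) * (\<Sum>i<nn p. ip p (E p k) (rr p i) * ip p (E p l) (rr p i)) = (if k = l then D p k else 0))"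
    by (rule choice_iff[THEN iffD1, THEN exE]) (rule that)
  note DE = DE0[rule_format]
  define mu' where "mu' k = spectral_distribution (sample_mat (Suc k) (nn (Suc k)) (rr (Suc k)))" for k
  have meas: "measure (mu' k) X = real (card {i\<in>{..<Suc k}. D (Suc k) i \<in> X}) / real (Suc k)"
    if "X \<in> sets borel" for k X
    unfolding mu'_def by (rule spec_measure[OF conjunct1[OF DE[of "Suc k"]]]) (use that in auto)
  have Dnn: "0 \<le> D p k" if "k < p" for p k
  proof -
    have "D p k = (1 / real (nn p)) * (\<Sum>i<nn p. ip p (E p k) (rr p i) * ip p (E p k) (rr p i))"
      using DE[of p] that by simp
    also have "\<dots> \<ge> 0" by (rule mult_nonneg_nonneg, simp, rule sum_nonneg, simp)
    finally show ?thesis .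
  qed
  have cnt: "real (card {k\<in>{..<p}. T < D p k}) \<le> 1 + L * real p / T" if "p \<ge> P0" "T > 0" for p T
    by (rule eig_count[where e = "E p" and r = "rr p" and n = "nn p" and m = "mu p"])
       (use DE[of p] that L bd in auto)
  show ?thesis
    unfolding tight_def mu'_def[symmetric]
  proof (intro conjI allI impI)
    fix k show "real_distribution (mu' k)" unfolding mu'_def by (rule spec_real_distribution)
  next
    fix \<epsilon> :: real assume eps: "\<epsilon> > 0"
    define T where "T = 4 * (L + 1) / \<epsilon>"
    have T: "T > 0" using eps L by (simp add: T_def)
    define K0 where "K0 = max P0 (nat \<lceil>4 / \<epsilon>\<rceil>)"
    define R where "R = Max ((\<lambda>(k,i). D (Suc k) i) ` ({..<K0} \<times> {..<Suc K0}))"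
    define b where "b = max T R"
    have Rge: "D (Suc k) i \<le> R" if "k < K0" "i < Suc k" for k i
      unfolding R_def by (rule Max_ge) (use that in \<open>auto intro!: image_eqI[of _ _ "(k,i)"]\<close>)
    have mono: "measure (mu' k) {-1<..T} \<le> measure (mu' k) {-1<..b}" for k
    proof -
      have "card {i\<in>{..<Suc k}. D (Suc k) i \<in> {-1<..T}} \<le> card {i\<in>{..<Suc k}. D (Suc k) i \<in> {-1<..b}}"
        by (rule card_mono) (auto simp: b_def)
      thus ?thesis by (simp add: meas divide_right_mono)
    qed
    have "1 - \<epsilon> < measure (mu' k) {-1<..b}" for k
    proof (cases "Suc k \<le> K0")
      case True
      have "{i\<in>{..<Suc k}. D (Suc k) i \<in> {-1<..b}} = {..<Suc k}"
        using Rge[of k] Dnn[of _ "Suc k"] True by (force simp: b_def)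
      hence "measure (mu' k) {-1<..b} = 1" by (simp add: meas)
      thus ?thesis using eps by simp
    next
      case False
      define p where "p = Suc k"
      have pP0: "p \<ge> P0" and pe: "real p \<ge> 4 / \<epsilon>" using False unfolding p_def K0_def by linarith+
      define cS where "cS = card {i\<in>{..<p}. T < D p i}"
      have cS: "real cS \<le> 1 + L * real p / T" using cnt[OF pP0 T] by (simp add: cS_def)
      have part: "card {i\<in>{..<p}. D p i \<in> {-1<..T}} + cS \<ge> p"
      proof -
        have "{..<p} \<subseteq> {i\<in>{..<p}. D p i \<in> {-1<..T}} \<union> {i\<in>{..<p}. T < D p i}"
          using Dnn[of _ p] by force
        hence "card {..<p} \<le> card ({i\<in>{..<p}. D p i \<in> {-1<..T}} \<union> {i\<in>{..<p}. T < D p i})"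
          by (intro card_mono) auto
        hence "p \<le> card ({i\<in>{..<p}. D p i \<in> {-1<..T}} \<union> {i\<in>{..<p}. T < D p i})" by simp
        also have "\<dots> \<le> card {i\<in>{..<p}. D p i \<in> {-1<..T}} + cS"
          unfolding cS_def by (rule card_Un_le)
        finally show ?thesis .
      qed
      have pp: "real p > 0" by (simp add: p_def)
      have "measure (mu' k) {-1<..T} = real (card {i\<in>{..<p}. D p i \<in> {-1<..T}}) / real p"
        by (simp add: meas p_def)
      also have "\<dots> \<ge> (real p - real cS) / real p"
        using part pp by (intro divide_right_mono) auto
      finally have m1: "measure (mu' k) {-1<..T} \<ge> 1 - real cS / real p"
        using pp by (simp add: diff_divide_distrib)
      have "real cS / real p \<le> 1 / real p + L / T"
        using cS pp by (simp add: field_simps)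
      also have "1 / real p \<le> \<epsilon> / 4" using pe eps pp by (simp add: field_simps)
      also have "L / T < \<epsilon> / 4" using eps L by (simp add: T_def field_simps)
      finally have "real cS / real p < \<epsilon> / 2" by simp
      hence "1 - \<epsilon> < measure (mu' k) {-1<..T}" using m1 eps by linarith
      thus ?thesis using mono[of k] by linarith
    qed
    moreover have "-1 < b" using T by (simp add: b_def)
    ultimately show "\<exists>a b. a < b \<and> (\<forall>n. 1 - \<epsilon> < measure (mu' n) {a<..b})" by blast
  qed
qed



definition Fn :: "nat \<Rightarrow> (nat \<Rightarrow> real) \<Rightarrow> (nat \<Rightarrow> real) \<Rightarrow> real" where
  "Fn p mu x = sqrt (\<Sum>j<p. (x j - mu j)^2)"

lemma Fn_L2: "Fn p mu x = L2_set (\<lambda>j. x j - mu j) {..<p}"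
  by (simp add: Fn_def L2_set_def)

lemma edist_L2: "edist p x y = L2_set (\<lambda>j. x j - y j) {..<p}"
  by (simp add: edist_def L2_set_def)

lemma Fn_lip: "lip1 p (Fn p mu)"
  unfolding lip1_def
proof (intro allI)
  fix x y :: "nat \<Rightarrow> real"
  have 1: "Fn p mu x \<le> Fn p mu y + edist p x y"
  proof -
    have "Fn p mu x = L2_set (\<lambda>j. (y j - mu j) + (x j - y j)) {..<p}" by (simp add: Fn_L2)
    also have "\<dots> \<le> L2_set (\<lambda>j. y j - mu j) {..<p} + L2_set (\<lambda>j. x j - y j) {..<p}"
      by (rule L2_set_triangle_ineq)
    finally show ?thesis by (simp add: Fn_L2 edist_L2)
  qed
  have 2: "Fn p mu y \<le> Fn p mu x + edist p x y"
  proof -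
    have "Fn p mu y = L2_set (\<lambda>j. (x j - mu j) + (y j - x j)) {..<p}" by (simp add: Fn_L2)
    also have "\<dots> \<le> L2_set (\<lambda>j. x j - mu j) {..<p} + L2_set (\<lambda>j. y j - x j) {..<p}"
      by (rule L2_set_triangle_ineq)
    also have "L2_set (\<lambda>j. y j - x j) {..<p} = edist p x y"
      by (simp add: edist_def L2_set_def power2_commute)
    finally show ?thesis by (simp add: Fn_L2)
  qed
  show "\<bar>Fn p mu x - Fn p mu y\<bar> \<le> edist p x y" using 1 2 by linarith
qed

lemma Fn_convex: "convex_fun (Fn p mu)"
  unfolding convex_fun_def
proof (intro allI impI)
  fix x y :: "nat \<Rightarrow> real" and t :: real assume t: "0 \<le> t \<and> t \<le> 1"
  have "Fn p mu (\<lambda>j. t * x j + (1 - t) * y j)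
      = L2_set (\<lambda>j. t * (x j - mu j) + (1 - t) * (y j - mu j)) {..<p}"
    by (simp add: Fn_L2 algebra_simps)
  also have "\<dots> \<le> L2_set (\<lambda>j. t * (x j - mu j)) {..<p} + L2_set (\<lambda>j. (1 - t) * (y j - mu j)) {..<p}"
    by (rule L2_set_triangle_ineq)
  also have "\<dots> = t * Fn p mu x + (1 - t) * Fn p mu y"
    using t by (simp add: Fn_L2 L2_set_right_distrib)
  finally show "Fn p mu (\<lambda>j. t * x j + (1 - t) * y j) \<le> t * Fn p mu x + (1 - t) * Fn p mu y" .
qed

lemma Fn_meas:
  assumes "\<forall>j<p. (\<lambda>\<omega>. X \<omega> j) \<in> borel_measurable M"
  shows "(\<lambda>\<omega>. Fn p mu (X \<omega>)) \<in> borel_measurable M"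
proof -
  have "(\<lambda>\<omega>. \<Sum>j<p. (X \<omega> j - mu j)^2) \<in> borel_measurable M"
    by (rule borel_measurable_sum) (use assms in auto)
  thus ?thesis unfolding Fn_def by measurable
qed

lemma tail_one:
  fixes M :: "'a measure" and X :: "'a \<Rightarrow> nat \<Rightarrow> real"
  assumes P: "prob_space M"
    and measX: "\<forall>j<p. (\<lambda>\<omega>. X \<omega> j) \<in> borel_measurable M"
    and sqi: "\<forall>j<p. integrable M (\<lambda>\<omega>. (X \<omega> j)^2)"
    and var: "(\<Sum>j<p. integral\<^sup>L M (\<lambda>\<omega>. (X \<omega> j - mu j) * (X \<omega> j - mu j))) \<le> Kp"
    and Kp: "0 \<le> Kp" and C: "0 < C" and s: "0 < s"
    and cf: "is_median M (\<lambda>\<omega>. Fn p mu (X \<omega>)) m"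
      "\<forall>t>0. measure M {\<omega>\<in>space M. \<bar>Fn p mu (X \<omega>) - m\<bar> > t} \<le> C * exp (- c * t powr \<beta>)"
      "G \<le> c * s powr \<beta>"
  shows "measure M {\<omega>\<in>space M. Fn p mu (X \<omega>) > sqrt (2 * Kp) + s} \<le> C * exp (- G)"
proof -
  interpret prob_space M by (rule P)
  define FX where "FX \<omega> = Fn p mu (X \<omega>)" for \<omega>
  have FXm[measurable]: "FX \<in> borel_measurable M" unfolding FX_def by (rule Fn_meas[OF measX])
  have intX: "integrable M (\<lambda>\<omega>. X \<omega> j)" if "j < p" for j
    by (rule square_integrable_imp_integrable) (use measX sqi that in auto)
  have intj: "integrable M (\<lambda>\<omega>. (X \<omega> j - mu j)^2)" if "j < p" for j
  proof -
    have "(\<lambda>\<omega>. (X \<omega> j - mu j)^2) = (\<lambda>\<omega>. (X \<omega> j)^2 - 2 * mu j * X \<omega> j + (mu j)^2)"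
      by (simp add: power2_diff algebra_simps)
    thus ?thesis using intX[OF that] sqi that by simp
  qed
  have FX2: "(FX \<omega>)^2 = (\<Sum>j<p. (X \<omega> j - mu j)^2)" for \<omega>
    by (simp add: FX_def Fn_def sum_nonneg)
  have intF: "integrable M (\<lambda>\<omega>. (FX \<omega>)^2)" unfolding FX2 using intj by auto
  have EF: "integral\<^sup>L M (\<lambda>\<omega>. (FX \<omega>)^2) \<le> Kp"
  proof -
    have "integral\<^sup>L M (\<lambda>\<omega>. (FX \<omega>)^2) = (\<Sum>j<p. integral\<^sup>L M (\<lambda>\<omega>. (X \<omega> j - mu j)^2))"
      unfolding FX2 by (rule Bochner_Integration.integral_sum[where f = "\<lambda>j \<omega>. (X \<omega> j - mu j)^2"]) (use intj in auto)
    also have "\<dots> = (\<Sum>j<p. integral\<^sup>L M (\<lambda>\<omega>. (X \<omega> j - mu j) * (X \<omega> j - mu j)))"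
      by (simp add: power2_eq_square)
    finally show ?thesis using var by simp
  qed
  have med: "m \<le> sqrt (2 * Kp)"
  proof (cases "m \<le> 0")
    case True thus ?thesis using real_sqrt_ge_zero[of "2*Kp"] Kp by linarith
  next
    case False
    hence m0: "m > 0" by simp
    have "1/2 \<le> measure M {\<omega>\<in>space M. FX \<omega> \<ge> m}" using cf(1) unfolding is_median_def FX_def by simp
    also have "\<dots> \<le> measure M {\<omega>\<in>space M. m^2 \<le> (FX \<omega>)^2}"
    proof (rule finite_measure_mono)
      show "{\<omega>\<in>space M. m^2 \<le> (FX \<omega>)^2} \<in> sets M" by measurable
      show "{\<omega>\<in>space M. FX \<omega> \<ge> m} \<subseteq> {\<omega>\<in>space M. m^2 \<le> (FX \<omega>)^2}"
      proof
        fix \<omega> assume "\<omega> \<in> {\<omega>\<in>space M. FX \<omega> \<ge> m}"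
        thus "\<omega> \<in> {\<omega>\<in>space M. m^2 \<le> (FX \<omega>)^2}" using m0 power_mono[of m "FX \<omega>" 2] by simp
      qed
    qed
    also have "\<dots> \<le> integral\<^sup>L M (\<lambda>\<omega>. (FX \<omega>)^2) / m^2"
      by (rule integral_Markov_inequality_measure[OF intF]) (use m0 in auto)
    also have "\<dots> \<le> Kp / m^2" using EF m0 by (simp add: divide_right_mono)
    finally have "1/2 \<le> Kp / m^2" .
    hence "1/2 * m^2 \<le> Kp" using m0 by (subst (asm) pos_le_divide_eq) auto
    hence "m^2 \<le> 2 * Kp" by linarith
    thus ?thesis by (rule real_le_rsqrt)
  qed
  have "measure M {\<omega>\<in>space M. Fn p mu (X \<omega>) > sqrt (2 * Kp) + s}
      \<le> measure M {\<omega>\<in>space M. \<bar>Fn p mu (X \<omega>) - m\<bar> > s}"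
  proof (rule finite_measure_mono)
    show "{\<omega>\<in>space M. \<bar>Fn p mu (X \<omega>) - m\<bar> > s} \<in> sets M"
      using FXm unfolding FX_def by measurable
    show "{\<omega>\<in>space M. Fn p mu (X \<omega>) > sqrt (2 * Kp) + s} \<subseteq> {\<omega>\<in>space M. \<bar>Fn p mu (X \<omega>) - m\<bar> > s}"
      using med by auto
  qed
  also have "\<dots> \<le> C * exp (- c * s powr \<beta>)" using cf(2) s by simp
  also have "\<dots> \<le> C * exp (- G)" using cf(3) C by simp
  finally show ?thesis .
qed


lemma median_cong:
  assumes "\<And>\<omega>. \<omega> \<in> space M \<Longrightarrow> f \<omega> = g \<omega>"
  shows "is_median M f m = is_median M g m"
proof -
  have "{\<omega>\<in>space M. f \<omega> \<ge> m} = {\<omega>\<in>space M. g \<omega> \<ge> m}" "{\<omega>\<in>space M. f \<omega> \<le> m} = {\<omega>\<in>space M. g \<omega> \<le> m}"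
    using assms by auto
  thus ?thesis by (simp add: is_median_def)
qed

lemma powr_gamma:
  fixes x :: real
  assumes x: "1 \<le> x" and g: "g \<le> e - a" and c1: "0 \<le> c1" and c: "c1 * x powr (-a) \<le> c"
  shows "c1 * x powr g \<le> c * x powr e"
proof -
  have "c1 * x powr g \<le> c1 * x powr (e - a)" using x g c1 by (intro mult_left_mono powr_mono) auto
  also have "\<dots> = (c1 * x powr (-a)) * x powr e" by (simp add: powr_add[symmetric])
  also have "\<dots> \<le> c * x powr e" using c by (intro mult_right_mono) auto
  finally show ?thesis .
qed

lemma hyp_cf:
  fixes M :: "'a measure" and X :: "'a \<Rightarrow> nat \<Rightarrow> real"
  assumes p: "1 \<le> real p"
    and H: "hypA M p X C ca \<or> hypB M p X C cb b \<or> hypC M p X C cc"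
    and ca: "c1 * real p powr (-\<alpha>a) \<le> ca" and cb: "c1 * real p powr (-\<alpha>b) \<le> cb"
    and cc: "c1 * real p powr (-\<alpha>c) \<le> cc"
    and g: "\<gamma> \<le> 1 - \<alpha>a" "\<gamma> \<le> b / 2 - \<alpha>b" "\<gamma> \<le> 1 - \<alpha>c" and c1: "0 \<le> c1"
  shows "\<exists>m c \<beta>. is_median M (\<lambda>\<omega>. Fn p mu (X \<omega>)) m \<and>
     (\<forall>t>0. measure M {\<omega>\<in>space M. \<bar>Fn p mu (X \<omega>) - m\<bar> > t} \<le> C * exp (- c * t powr \<beta>)) \<and>
     c1 * real p powr \<gamma> \<le> c * sqrt (real p) powr \<beta>"
proof -
  have sq2: "sqrt (real p) powr 2 = real p powr 1" using p by simp
  have sqb: "sqrt (real p) powr b = real p powr (b / 2)"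
    using p by (simp add: powr_half_sqrt[symmetric] powr_powr)
  have FF: "convex_fun (Fn p mu) \<and> lip1 p (Fn p mu)" using Fn_convex Fn_lip by blast
  from H consider (A) "hypA M p X C ca" | (B) "hypB M p X C cb b" | (C) "hypC M p X C cc" by blast
  thus ?thesis
  proof cases
    case A
    then obtain m where m: "is_median M (\<lambda>\<omega>. Fn p mu (X \<omega>)) m"
      "\<forall>t>0. measure M {\<omega>\<in>space M. \<bar>Fn p mu (X \<omega>) - m\<bar> > t} \<le> C * exp (- ca * t powr 2)"
      unfolding hypA_def concentr_def using FF by blast
    have "c1 * real p powr \<gamma> \<le> ca * real p powr 1" by (rule powr_gamma) (use p g c1 ca in auto)
    thus ?thesis using m sq2 by (intro exI[of _ m] exI[of _ ca] exI[of _ 2]) auto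
  next
    case B
    then obtain m where m: "is_median M (\<lambda>\<omega>. Fn p mu (X \<omega>)) m"
      "\<forall>t>0. measure M {\<omega>\<in>space M. \<bar>Fn p mu (X \<omega>) - m\<bar> > t} \<le> C * exp (- cb * t powr b)"
      unfolding hypB_def concentr_def using FF by blast
    have "c1 * real p powr \<gamma> \<le> cb * real p powr (b / 2)" by (rule powr_gamma) (use p g c1 cb in auto)
    thus ?thesis using m sqb by (intro exI[of _ m] exI[of _ cb] exI[of _ b]) auto
  next
    case C
    then obtain d u \<Phi> where u: "\<forall>x y. edist p (\<Phi> x) (\<Phi> y) \<le> edist d x y"
      "\<forall>\<omega>\<in>space M. \<forall>j<p. X \<omega> j = \<Phi> (u \<omega>) j" "concentr M (lip1 d) u C cc 2"
      unfolding hypC_def by blast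
    define G where "G x = Fn p mu (\<Phi> x)" for x
    have "lip1 d G"
      unfolding lip1_def G_def using Fn_lip[of p mu] u(1) unfolding lip1_def by (meson order_trans)
    then obtain m where m: "is_median M (\<lambda>\<omega>. G (u \<omega>)) m"
      "\<forall>t>0. measure M {\<omega>\<in>space M. \<bar>G (u \<omega>) - m\<bar> > t} \<le> C * exp (- cc * t powr 2)"
      using u(3) unfolding concentr_def by blast
    have eqF: "Fn p mu (X \<omega>) = G (u \<omega>)" if "\<omega> \<in> space M" for \<omega>
      unfolding G_def Fn_def using u(2) that by simp
    have m1: "is_median M (\<lambda>\<omega>. Fn p mu (X \<omega>)) m" using m(1) median_cong[of M, OF eqF] by simp
    have setseq: "{\<omega>\<in>space M. \<bar>Fn p mu (X \<omega>) - m\<bar> > t} = {\<omega>\<in>space M. \<bar>G (u \<omega>) - m\<bar> > t}" for t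
      using eqF by auto
    have "c1 * real p powr \<gamma> \<le> cc * real p powr 1" by (rule powr_gamma) (use p g c1 cc in auto)
    thus ?thesis using m1 m(2) sq2 setseq by (intro exI[of _ m] exI[of _ cc] exI[of _ 2]) auto
  qed
qed


lemma summ_exp:
  fixes c g :: real
  assumes "c > 0" "g > 0"
  shows "summable (\<lambda>p. real p * exp (- c * real p powr g))"
proof (rule summable_comparison_test_bigo)
  show "(\<lambda>p. real p * exp (- c * real p powr g)) \<in> O(\<lambda>p. inverse (real p ^ 2))"
    using assms by real_asymp
  show "summable (\<lambda>n. norm (inverse (real n ^ 2)))"
    using inverse_power_summable[of 2] by simp
qed



theorem corollary5:
  fixes M :: "'a measure"
    and n :: "nat \<Rightarrow> nat"
    and r :: "nat \<Rightarrow> nat \<Rightarrow> 'a \<Rightarrow> nat \<Rightarrow> real"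
    and \<mu> :: "nat \<Rightarrow> nat \<Rightarrow> real"
    and \<Sigma> :: "nat \<Rightarrow> nat \<Rightarrow> nat \<Rightarrow> real"
    and p0 :: nat and B K :: real
  assumes P: "prob_space M"
    and n_bounded: "\<forall>p. real (n p) \<le> B * real p"
    and meas: "\<forall>p\<ge>p0. \<forall>i<n p. \<forall>j<p. (\<lambda>\<omega>. r p i \<omega> j) \<in> borel_measurable M"
    and indep: "\<forall>p\<ge>p0. prob_space.indep_vars M (\<lambda>_. PiM {..<p} (\<lambda>_. borel))
                   (\<lambda>i \<omega>. restrict (r p i \<omega>) {..<p}) {..<n p}"
    and sq_int: "\<forall>p\<ge>p0. \<forall>i<n p. \<forall>j<p. integrable M (\<lambda>\<omega>. (r p i \<omega> j)^2)"
    and mean: "\<forall>p\<ge>p0. \<forall>i<n p. \<forall>j<p. integral\<^sup>L M (\<lambda>\<omega>. r p i \<omega> j) = \<mu> p j"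
    and cov: "\<forall>p\<ge>p0. \<forall>i<n p. \<forall>j<p. \<forall>k<p.
               integral\<^sup>L M (\<lambda>\<omega>. (r p i \<omega> j - \<mu> p j) * (r p i \<omega> k - \<mu> p k)) = \<Sigma> p j k"
    and norm_bd: "\<forall>p\<ge>p0. op_norm2 p (\<Sigma> p) \<le> ln (real p)"
    and trace_bd: "\<forall>p\<ge>p0. (\<Sum>j<p. \<Sigma> p j j) / real p \<le> K"
    and conc: "\<exists>C b \<alpha>a \<alpha>b \<alpha>c ca cb cc c1 c2.
        C > 0 \<and> b > 0 \<and> c1 > 0 \<and> c2 > 0 \<and>
        0 \<le> \<alpha>a \<and> \<alpha>a < 1 \<and> 0 \<le> \<alpha>b \<and> \<alpha>b < b / 2 \<and> 0 \<le> \<alpha>c \<and> \<alpha>c < 1 \<and>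
        (\<forall>p\<ge>p0. c1 * real p powr (-\<alpha>a) \<le> ca p \<and> ca p \<le> c2 * real p powr (-\<alpha>a)) \<and>
        (\<forall>p\<ge>p0. c1 * real p powr (-\<alpha>b) \<le> cb p \<and> cb p \<le> c2 * real p powr (-\<alpha>b)) \<and>
        (\<forall>p\<ge>p0. c1 * real p powr (-\<alpha>c) \<le> cc p \<and> cc p \<le> c2 * real p powr (-\<alpha>c)) \<and>
        (\<forall>p\<ge>p0. \<forall>i<n p. hypA M p (r p i) C (ca p) \<or> hypB M p (r p i) C (cb p) b
                            \<or> hypC M p (r p i) C (cc p))"
  shows "AE \<omega> in M. tight (\<lambda>k. spectral_distribution
            (sample_mat (Suc k) (n (Suc k)) (\<lambda>i. r (Suc k) i \<omega>)))"
proof -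
  interpret prob_space M by (rule P)
  from conc obtain C b \<alpha>a \<alpha>b \<alpha>c ca cb cc c1 c2 where cs:
       "C > 0 \<and> b > 0 \<and> c1 > 0 \<and> c2 > 0 \<and>
        0 \<le> \<alpha>a \<and> \<alpha>a < 1 \<and> 0 \<le> \<alpha>b \<and> \<alpha>b < b / 2 \<and> 0 \<le> \<alpha>c \<and> \<alpha>c < 1 \<and>
        (\<forall>p\<ge>p0. c1 * real p powr (-\<alpha>a) \<le> ca p \<and> ca p \<le> c2 * real p powr (-\<alpha>a)) \<and>
        (\<forall>p\<ge>p0. c1 * real p powr (-\<alpha>b) \<le> cb p \<and> cb p \<le> c2 * real p powr (-\<alpha>b)) \<and>
        (\<forall>p\<ge>p0. c1 * real p powr (-\<alpha>c) \<le> cc p \<and> cc p \<le> c2 * real p powr (-\<alpha>c)) \<and>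
        (\<forall>p\<ge>p0. \<forall>i<n p. hypA M p (r p i) C (ca p) \<or> hypB M p (r p i) C (cb p) b
                            \<or> hypC M p (r p i) C (cc p))"
    by (elim exE)
  have C: "C > 0" and b: "b > 0" and c1: "c1 > 0"
    and al: "0 \<le> \<alpha>a" "\<alpha>a < 1" "0 \<le> \<alpha>b" "\<alpha>b < b / 2" "0 \<le> \<alpha>c" "\<alpha>c < 1"
    using cs by (simp_all only: )
  have ca: "\<forall>p\<ge>p0. c1 * real p powr (-\<alpha>a) \<le> ca p"
    and cb: "\<forall>p\<ge>p0. c1 * real p powr (-\<alpha>b) \<le> cb p"
    and cc: "\<forall>p\<ge>p0. c1 * real p powr (-\<alpha>c) \<le> cc p"
    and hyp: "\<forall>p\<ge>p0. \<forall>i<n p. hypA M p (r p i) C (ca p) \<or> hypB M p (r p i) C (cb p) b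
                            \<or> hypC M p (r p i) C (cc p)"
    using cs by blast+
  define \<gamma> where "\<gamma> = min (1 - \<alpha>a) (min (b / 2 - \<alpha>b) (1 - \<alpha>c))"
  have \<gamma>: "\<gamma> > 0" using al by (simp add: \<gamma>_def)
  define K' where "K' = max K 0"
  have K': "0 \<le> K'" by (simp add: K'_def)
  define Bm where "Bm = max B 0"
  define P1 where "P1 = max p0 1"
  define thr where "thr p = sqrt (2 * (K' * real p)) + sqrt (real p)" for p :: nat
  define E where "E p i = {\<omega>\<in>space M. thr p < Fn p (\<mu> p) (r p i \<omega>)}" for p i
  define A where "A p = (if P1 \<le> p then (\<Union>i<n p. E p i) else {})" for p
  have Em: "E p i \<in> sets M" if "P1 \<le> p" "i < n p" for p i
  proof -
    have "(\<lambda>\<omega>. Fn p (\<mu> p) (r p i \<omega>)) \<in> borel_measurable M"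
      by (rule Fn_meas) (use meas that in \<open>auto simp: P1_def\<close>)
    thus ?thesis unfolding E_def by measurable
  qed
  have Am: "A p \<in> sets M" for p
    unfolding A_def using Em by auto
  have Ebd: "measure M (E p i) \<le> C * exp (- (c1 * real p powr \<gamma>))" if p: "P1 \<le> p" "i < n p" for p i
  proof -
    have pp0: "p \<ge> p0" and p1: "1 \<le> real p" using p by (auto simp: P1_def)
    have ex: "\<exists>m c \<beta>. is_median M (\<lambda>\<omega>. Fn p (\<mu> p) (r p i \<omega>)) m \<and>
      (\<forall>t>0. measure M {\<omega>\<in>space M. \<bar>Fn p (\<mu> p) (r p i \<omega>) - m\<bar> > t} \<le> C * exp (- c * t powr \<beta>)) \<and>
      c1 * real p powr \<gamma> \<le> c * sqrt (real p) powr \<beta>"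
      by (rule hyp_cf[OF p1 hyp[rule_format, OF pp0 p(2)] ca[rule_format, OF pp0] cb[rule_format, OF pp0]
          cc[rule_format, OF pp0]]) (use c1 in \<open>auto simp: \<gamma>_def\<close>)
    then obtain m c \<beta> where cf: "is_median M (\<lambda>\<omega>. Fn p (\<mu> p) (r p i \<omega>)) m"
      "\<forall>t>0. measure M {\<omega>\<in>space M. \<bar>Fn p (\<mu> p) (r p i \<omega>) - m\<bar> > t} \<le> C * exp (- c * t powr \<beta>)"
      "c1 * real p powr \<gamma> \<le> c * sqrt (real p) powr \<beta>" by blast
    have var: "(\<Sum>j<p. integral\<^sup>L M (\<lambda>\<omega>. (r p i \<omega> j - \<mu> p j) * (r p i \<omega> j - \<mu> p j))) \<le> K' * real p"
    proof -
      have "(\<Sum>j<p. integral\<^sup>L M (\<lambda>\<omega>. (r p i \<omega> j - \<mu> p j) * (r p i \<omega> j - \<mu> p j))) = (\<Sum>j<p. \<Sigma> p j j)"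
        using cov pp0 p(2) by simp
      also have "\<dots> \<le> K * real p" using trace_bd pp0 p1 by (simp add: divide_le_eq)
      also have "\<dots> \<le> K' * real p" using p1 by (intro mult_right_mono) (auto simp: K'_def)
      finally show ?thesis .
    qed
    have "measure M (E p i) \<le> C * exp (- (c1 * real p powr \<gamma>))"
      unfolding E_def thr_def
      by (rule tail_one[OF P _ _ var _ C _ cf]) (use meas sq_int pp0 p K' p1 in auto)
    thus ?thesis .
  qed
  have Abd: "measure M (A p) \<le> Bm * C * (real p * exp (- c1 * real p powr \<gamma>))" for p
  proof (cases "P1 \<le> p")
    case False thus ?thesis using C by (simp add: A_def Bm_def)
  next
    case True
    have "measure M (A p) \<le> (\<Sum>i<n p. measure M (E p i))"
      unfolding A_def using True by (simp, intro finite_measure_subadditive_finite) (use Em True in auto)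
    also have "\<dots> \<le> (\<Sum>i<n p. C * exp (- (c1 * real p powr \<gamma>)))"
      by (intro sum_mono Ebd) (use True in auto)
    also have "\<dots> = real (n p) * (C * exp (- (c1 * real p powr \<gamma>)))" by simp
    also have "\<dots> \<le> (Bm * real p) * (C * exp (- (c1 * real p powr \<gamma>)))"
      using n_bounded C by (intro mult_right_mono) (auto simp: Bm_def intro: order_trans[OF _ mult_right_mono])
    finally show ?thesis by (simp add: mult_ac)
  qed
  have summ: "summable (\<lambda>p. measure M (A p))"
  proof (rule summable_comparison_test')
    show "summable (\<lambda>p. Bm * C * (real p * exp (- c1 * real p powr \<gamma>)))"
      by (intro summable_mult summ_exp c1 \<gamma>)
    show "norm (measure M (A p)) \<le> Bm * C * (real p * exp (- c1 * real p powr \<gamma>))" for p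
      using Abd[of p] by simp
  qed
  have BC: "AE \<omega> in M. eventually (\<lambda>p. \<omega> \<in> space M - A p) sequentially"
    by (rule borel_cantelli_AE1) (use Am summ in \<open>auto simp: emeasure_eq_measure\<close>)
  show ?thesis
    using BC
  proof (rule eventually_mono)
    fix \<omega> assume ev: "eventually (\<lambda>p. \<omega> \<in> space M - A p) sequentially"
    then obtain P2 where P2: "\<And>p. p \<ge> P2 \<Longrightarrow> \<omega> \<in> space M - A p" by (auto simp: eventually_sequentially)
    define Lc where "Lc = (sqrt (2 * K') + 1)^2"
    have bd: "\<forall>p\<ge>max P1 P2. \<forall>i<n p. (\<Sum>j<p. (r p i \<omega> j - \<mu> p j)^2) \<le> Lc * real p"
    proof (intro allI impI)
      fix p i assume p: "max P1 P2 \<le> p" and i: "i < n p"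
      have "\<omega> \<in> space M" "\<omega> \<notin> A p" using P2[of p] p by auto
      hence "\<omega> \<notin> E p i" using p i by (auto simp: A_def)
      hence le: "Fn p (\<mu> p) (r p i \<omega>) \<le> thr p" using \<open>\<omega> \<in> space M\<close> by (auto simp: E_def)
      have F0: "0 \<le> Fn p (\<mu> p) (r p i \<omega>)" by (simp add: Fn_def sum_nonneg)
      have "(\<Sum>j<p. (r p i \<omega> j - \<mu> p j)^2) = (Fn p (\<mu> p) (r p i \<omega>))^2"
        by (simp add: Fn_def sum_nonneg)
      also have "\<dots> \<le> (thr p)^2" using le F0 by (intro power_mono) auto
      also have "thr p = (sqrt (2 * K') + 1) * sqrt (real p)"
        by (simp add: thr_def real_sqrt_mult algebra_simps)
      also have "((sqrt (2 * K') + 1) * sqrt (real p))^2 = Lc * real p"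
        by (simp add: Lc_def power_mult_distrib)
      finally show "(\<Sum>j<p. (r p i \<omega> j - \<mu> p j)^2) \<le> Lc * real p" .
    qed
    show "tight (\<lambda>k. spectral_distribution (sample_mat (Suc k) (n (Suc k)) (\<lambda>i. r (Suc k) i \<omega>)))"
      using tight_crit[of Lc "max P1 P2" n "\<lambda>p i j. r p i \<omega> j" \<mu>] bd by (simp add: Lc_def)
  qed
qed


end
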